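(* Let $\Omega$ be either a Segre variety $\mathcal{S}_{\ell,k}(\mathbb{K})$ with $\ell\le3$, $k\ge1$, or one of the line Grassmannians $\mathcal{G}_{5,2}(\mathbb{K})$, $\mathcal{G}_{6,2}(\mathbb{K})$, viewed in the projective space it spans. Then the only subspace of $\langle\Omega\rangle$ which is legal with respect to $\Omega$ is the empty subspace; i.e. $\Omega$ admits no proper legal projection.
   Context: Let $\Omega$ be a Segre variety $\mathcal{S}_{\ell,k}(\mathbb{K})$ (image of the Segre map, i.e. the rank-one $(\ell+1)\times(k+1)$ matrices up to scalars) or a line Grassmannian $\mathcal{G}_{n+1,2}(\mathbb{K})$ (Plücker image of the lines of $\mathbb{P}^n(\mathbb{K})$), with point set $X$; two points are collinear if the line joining them lies in $X$. Let $\Xi$ be the set of subspaces spanned by the convex closures (in $X$) of pairs of non-collinear points at distance 2 (these are grids, resp. Klein quadrics). A subspace $S$ of $\langle X\rangle$ is legal with respect to $\Omega$ if $S$ is disjoint from $\langle\xi_1,\xi_2\rangle$ for all $\xi_1,\xi_2\in\Xi$; a legal projection is a projection from a legal subspace onto a complementary subspace, and it is proper if the subspace is non-empty. *)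

theory Defs
  imports "HOL-Analysis.Analysis"
begin

(* Projective space PG(V) over a field 'a, V = 'a^'i (finite-dimensional).
   A point set X of PG(V) is represented by its cone: the set of nonzero
   vectors representing its points (closed under nonzero scalars).
   Projective subspaces are represented by linear subspaces of V
   (the empty projective subspace is the zero subspace {0}). *)

definition pcollinear :: "('a::field^'i) set \<Rightarrow> 'a^'i \<Rightarrow> 'a^'i \<Rightarrow> bool" where
  "pcollinear X p q \<longleftrightarrow> p \<noteq> 0 \<and> q \<noteq> 0 \<and> vec.span {p, q} - {0} \<subseteq> X"

definition pwalk :: "('a::field^'i) set \<Rightarrow> 'a^'i \<Rightarrow> 'a^'i \<Rightarrow> nat \<Rightarrow> bool" where
  "pwalk X p q n \<longleftrightarrow>
     (\<exists>f. f 0 = p \<and> f n = q \<and> (\<forall>i<n. pcollinear X (f i) (f (Suc i))))"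

definition psubspace_closed :: "('a::field^'i) set \<Rightarrow> ('a^'i) set \<Rightarrow> bool" where
  "psubspace_closed X C \<longleftrightarrow>
     (\<forall>a\<in>C. \<forall>b\<in>C. pcollinear X a b \<longrightarrow> vec.span {a, b} - {0} \<subseteq> C)"

definition geod_closed :: "('a::field^'i) set \<Rightarrow> ('a^'i) set \<Rightarrow> bool" where
  "geod_closed X C \<longleftrightarrow>
     (\<forall>a\<in>C. \<forall>b\<in>C. \<forall>n f. f 0 = a \<and> f n = b \<and> (\<forall>i<n. pcollinear X (f i) (f (Suc i)))
        \<and> (\<forall>m<n. \<not> pwalk X a b m) \<longrightarrow> (\<forall>i\<le>n. f i \<in> C))"

definition pconvex :: "('a::field^'i) set \<Rightarrow> ('a^'i) set \<Rightarrow> bool" where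
  "pconvex X C \<longleftrightarrow> C \<subseteq> X \<and> psubspace_closed X C \<and> geod_closed X C"

definition convex_closure2 :: "('a::field^'i) set \<Rightarrow> 'a^'i \<Rightarrow> 'a^'i \<Rightarrow> ('a^'i) set" where
  "convex_closure2 X p q = \<Inter> {C. pconvex X C \<and> p \<in> C \<and> q \<in> C}"

definition Xi :: "('a::field^'i) set \<Rightarrow> ('a^'i) set set" where
  "Xi X = {vec.span (convex_closure2 X p q) | p q.
             p \<in> X \<and> q \<in> X \<and> \<not> pcollinear X p q \<and> pwalk X p q 2}"

definition legal :: "('a::field^'i) set \<Rightarrow> ('a^'i) set \<Rightarrow> bool" where
  "legal X W \<longleftrightarrow> vec.subspace W \<and> W \<subseteq> vec.span X \<and>
     (\<forall>\<xi>1\<in>Xi X. \<forall>\<xi>2\<in>Xi X. W \<inter> vec.span (\<xi>1 \<union> \<xi>2) = {0})"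

text \<open>Segre variety S_{l,k}: rank one (l+1)x(k+1) matrices, with CARD('l) = l+1,
  CARD('k) = k+1; matrices are vectors indexed by 'l \<times> 'k.\<close>
definition segre_pts :: "('a::field^('l::finite \<times> 'k::finite)) set" where
  "segre_pts = {(\<chi> ij. u $ fst ij * v $ snd ij) | (u :: 'a^'l) (v :: 'a^'k). u \<noteq> 0 \<and> v \<noteq> 0}"

text \<open>Line Grassmannian G_{n+1,2}: Pluecker images u \<wedge> v (as alternating
  matrices indexed by 'n \<times> 'n) of lines spanned by independent u, v in 'a^'n,
  CARD('n) = n+1.\<close>
definition grass_pts :: "('a::field^('n::finite \<times> 'n)) set" where
  "grass_pts = {(\<chi> ij. u $ fst ij * v $ snd ij - u $ snd ij * v $ fst ij) | (u :: 'a^'n) v.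
                 u \<noteq> v \<and> vec.independent {u, v}}"

end

theory Submission
  imports Defs
begin

lemma mid_in_cc:
  assumes "pcollinear X p r" "pcollinear X r q" "p \<noteq> q" "\<not> pcollinear X p q"
  shows "r \<in> convex_closure2 X p q"
  unfolding convex_closure2_def
proof (intro InterI, clarify)
  fix C assume C: "pconvex X C" "p \<in> C" "q \<in> C"
  define f where "f = (\<lambda>i::nat. if i = 0 then p else if i = 1 then r else q)"
  have g: "geod_closed X C" using C(1) by (simp add: pconvex_def)
  have nw: "\<forall>m<2. \<not> pwalk X p q m"
  proof (intro allI impI)
    fix m :: nat assume "m < 2"
    then consider "m = 0" | "m = 1" by linarith
    then show "\<not> pwalk X p q m"
      by cases (use assms in \<open>auto simp: pwalk_def\<close>)
  qed
  have "\<forall>i<2. pcollinear X (f i) (f (Suc i))"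
    using assms by (auto simp: f_def less_2_cases_iff)
  hence "\<forall>i\<le>2. f i \<in> C"
    using g[unfolded geod_closed_def, rule_format, where a=p and b=q and n=2 and f=f] C nw by (simp add: f_def)
  thus "r \<in> C" by (auto simp: f_def dest: spec[of _ 1])
qed

lemma in_cc: "p \<in> convex_closure2 X p q" "q \<in> convex_closure2 X p q"
  unfolding convex_closure2_def by auto

lemma Xi_mem:
  assumes "p \<in> X" "q \<in> X" "\<not> pcollinear X p q" "pcollinear X p r" "pcollinear X r q"
  shows "vec.span (convex_closure2 X p q) \<in> Xi X"
proof -
  define f where "f = (\<lambda>i::nat. if i = 0 then p else if i = 1 then r else q)"
  have "pwalk X p q 2" unfolding pwalk_def
    by (rule exI[of _ f]) (use assms in \<open>auto simp: f_def less_2_cases_iff\<close>)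
  thus ?thesis using assms unfolding Xi_def by blast
qed

lemma span2: "x \<in> vec.span {p, q} \<Longrightarrow> \<exists>a b. x = a *s p + b *s q"
  apply (auto simp: vec.span_breakdown_eq vec.span_singleton algebra_simps)
  by blast

lemma span2I: "a *s p + b *s q \<in> vec.span {p, q}"
  by (intro vec.span_add vec.span_scale vec.span_base) auto

definition ax :: "'n \<Rightarrow> 'a::field^'n" where "ax i = (\<chi> j. if j = i then 1 else 0)"

lemma ax_nth[simp]: "ax i $ j = (if j = i then 1 else 0)" by (simp add: ax_def)

definition minor :: "'a::field^'n \<Rightarrow> 'a^'n \<Rightarrow> 'n \<Rightarrow> 'n \<Rightarrow> 'a" where
  "minor x y s t = x$s * y$t - x$t * y$s"

lemma pair_ext:
  fixes a b :: "'a::field^'k"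
  assumes ij: "i \<in> S" "j \<in> S" "i \<noteq> j"
    and sa: "\<forall>m. m \<notin> S \<longrightarrow> a$m = 0" and sb: "\<forall>m. m \<notin> S \<longrightarrow> b$m = 0"
  shows "\<exists>x y s t c1 d1 c2 d2. (\<forall>m. m \<notin> S \<longrightarrow> x$m = 0) \<and> (\<forall>m. m \<notin> S \<longrightarrow> y$m = 0)
     \<and> minor x y s t \<noteq> 0 \<and> a = c1 *s x + d1 *s y \<and> b = c2 *s x + d2 *s y"
proof (cases "\<exists>s t. minor a b s t \<noteq> 0")
  case True
  then obtain s t where "minor a b s t \<noteq> 0" by blast
  then show ?thesis using sa sb
    by (intro exI[of _ a] exI[of _ b] exI[of _ s] exI[of _ t] exI[of _ 1] exI[of _ 0]
          exI[of _ 0] exI[of _ 1]) (simp_all)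
next
  case False
  hence mz: "\<And>s t. a$s * b$t = a$t * b$s" by (auto simp: minor_def)
  show ?thesis
  proof (cases "a = 0")
    case False
    then obtain s where s: "a$s \<noteq> 0" by (metis vec_eq_iff zero_index)
    hence sS: "s \<in> S" using sa by auto
    obtain t where t: "t \<in> S" "t \<noteq> s" using ij by blast
    have mn: "minor a (ax t) s t \<noteq> 0" using s t by (auto simp: minor_def)
    define c where "c = b$s / a$s"
    have hb: "b = c *s a"
    proof (subst vec_eq_iff, intro allI)
      fix m show "b$m = (c *s a)$m" using mz[of s m] s by (simp add: c_def field_simps)
    qed
    show ?thesis using mn sa t
      by (intro exI[of _ a] exI[of _ "ax t"] exI[of _ s] exI[of _ t] exI[of _ 1] exI[of _ 0]
          exI[of _ c] exI[of _ 0]) (auto simp: hb)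
  next
    case a0: True
    show ?thesis
    proof (cases "b = 0")
      case False
      then obtain s where s: "b$s \<noteq> 0" by (metis vec_eq_iff zero_index)
      hence sS: "s \<in> S" using sb by auto
      obtain t where t: "t \<in> S" "t \<noteq> s" using ij by blast
      have mn: "minor b (ax t) s t \<noteq> 0" using s t by (auto simp: minor_def)
      then show ?thesis using mn sb t a0
        by (intro exI[of _ b] exI[of _ "ax t"] exI[of _ s] exI[of _ t] exI[of _ 0] exI[of _ 0]
            exI[of _ 1] exI[of _ 0]) (simp_all)
    next
      case True
      have mn: "minor (ax i) (ax j) i j \<noteq> 0" using ij by (auto simp: minor_def)
      then show ?thesis using ij a0 True
        by (intro exI[of _ "ax i"] exI[of _ "ax j"] exI[of _ i] exI[of _ j] exI[of _ 0] exI[of _ 0]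
            exI[of _ 0] exI[of _ 0]) (simp_all)
    qed
  qed
qed

definition St :: "'a::field^'l \<Rightarrow> 'a^'k \<Rightarrow> 'a^('l \<times> 'k)" where
  "St u v = (\<chi> ij. u$fst ij * v$snd ij)"

lemma St_nth[simp]: "St u v $ (i, j) = u$i * v$j" by (simp add: St_def)

lemma St_in: "u \<noteq> 0 \<Longrightarrow> v \<noteq> 0 \<Longrightarrow> St u v \<in> segre_pts"
  unfolding segre_pts_def St_def by blast

lemma St_nz: assumes "u \<noteq> 0" "v \<noteq> 0" shows "St u v \<noteq> 0"
proof -
  obtain i where "u$i \<noteq> 0" using assms(1) by (metis vec_eq_iff zero_index)
  moreover obtain j where "v$j \<noteq> 0" using assms(2) by (metis vec_eq_iff zero_index)
  ultimately have "St u v $ (i,j) \<noteq> 0" by simp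
  thus ?thesis by (metis zero_index)
qed

lemma St_0r[simp]: "St u 0 = 0" and St_0l[simp]: "St 0 v = 0"
  by (auto simp: vec_eq_iff)

lemma St_lin_r: "a *s St u v1 + b *s St u v2 = St u (a *s v1 + b *s v2)"
  by (auto simp: vec_eq_iff algebra_simps)
lemma St_lin_l: "a *s St u1 v + b *s St u2 v = St (a *s u1 + b *s u2) v"
  by (auto simp: vec_eq_iff algebra_simps)

lemma col_S_r:
  assumes "u \<noteq> 0" "v1 \<noteq> 0" "v2 \<noteq> 0"
  shows "pcollinear segre_pts (St u v1) (St u v2)"
  unfolding pcollinear_def
proof (intro conjI St_nz assms subsetI)
  fix x assume x: "x \<in> vec.span {St u v1, St u v2} - {0}"
  then obtain a b where "x = a *s St u v1 + b *s St u v2" using span2 by blast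
  hence "x = St u (a *s v1 + b *s v2)" by (simp add: St_lin_r)
  moreover have "a *s v1 + b *s v2 \<noteq> 0" using x calculation by auto
  ultimately show "x \<in> segre_pts" using St_in assms by auto
qed

lemma col_S_l:
  assumes "u1 \<noteq> 0" "u2 \<noteq> 0" "v \<noteq> 0"
  shows "pcollinear segre_pts (St u1 v) (St u2 v)"
  unfolding pcollinear_def
proof (intro conjI St_nz assms subsetI)
  fix x assume x: "x \<in> vec.span {St u1 v, St u2 v} - {0}"
  then obtain a b where "x = a *s St u1 v + b *s St u2 v" using span2 by blast
  hence "x = St (a *s u1 + b *s u2) v" by (simp add: St_lin_l)
  moreover have "a *s u1 + b *s u2 \<noteq> 0" using x calculation by auto
  ultimately show "x \<in> segre_pts" using St_in assms by auto
qed

lemma segre_rank1: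
  assumes "z \<in> segre_pts"
  shows "z$(i1,s) * z$(i2,t) - z$(i1,t) * z$(i2,s) = 0"
  using assms unfolding segre_pts_def by (auto simp: algebra_simps)

lemma minor_nz: "minor x y s t \<noteq> 0 \<Longrightarrow> x \<noteq> 0 \<and> y \<noteq> 0"
  by (auto simp: minor_def)

lemma noncol_S:
  assumes "i1 \<noteq> i2" "minor x y s t \<noteq> 0"
  shows "\<not> pcollinear segre_pts (St (ax i1 :: 'a::field^'l) x) (St (ax i2) (y :: 'a^'k))"
proof
  assume c: "pcollinear segre_pts (St (ax i1 :: 'a::field^'l) x) (St (ax i2) y)"
  define z where "z = St (ax i1 :: 'a^'l) x + St (ax i2) y"
  have "z \<in> vec.span {St (ax i1 :: 'a^'l) x, St (ax i2) y}"
    unfolding z_def by (intro vec.span_add vec.span_base) auto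
  moreover have zv: "z$(i1,s) * z$(i2,t) - z$(i1,t) * z$(i2,s) = minor x y s t"
    using assms(1) by (simp add: z_def minor_def)
  moreover have "z \<noteq> 0" using zv assms(2) by auto
  ultimately have "z \<in> segre_pts" using c unfolding pcollinear_def by blast
  from segre_rank1[OF this, of i1 s i2 t] zv assms(2) show False by simp
qed

lemma ax_nz: "ax i \<noteq> (0::'a::field^'n)"
  by (metis ax_nth zero_index one_neq_zero)

lemma two_elems:
  assumes "2 \<le> CARD('k::finite)" shows "\<exists>j1 j2::'k. j1 \<noteq> j2"
proof (rule ccontr)
  assume "\<not> ?thesis"
  hence "(UNIV::'k set) = {undefined}" by auto
  hence "CARD('k) = card {undefined::'k}" by (rule arg_cong)
  thus False using assms by simp
qed

lemma seg_grid:
  fixes a b :: "'a::field^'k"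
  assumes "i1 \<noteq> i2" "2 \<le> CARD('k)"
  shows "\<exists>\<xi>\<in>Xi (segre_pts :: ('a^('l \<times> 'k)) set). St (ax i1 :: 'a^'l) a + St (ax i2) b \<in> \<xi>"
proof -
  obtain j1 j2 :: 'k where j: "j1 \<noteq> j2"
    using two_elems[OF assms(2)] by blast
  obtain x y s t c1 d1 c2 d2 where xy: "minor x y s t \<noteq> 0" "a = c1 *s x + d1 *s y"
    "b = c2 *s x + d2 *s y"
    using pair_ext[of j1 UNIV j2 a b] j by auto
  have x0: "x \<noteq> 0" and y0: "y \<noteq> 0" using minor_nz[OF xy(1)] by auto
  define p where "p = St (ax i1 :: 'a^'l) x"
  define q where "q = St (ax i2 :: 'a^'l) y"
  define r1 where "r1 = St (ax i1 :: 'a^'l) y"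
  define r2 where "r2 = St (ax i2 :: 'a^'l) x"
  have nc: "\<not> pcollinear segre_pts p q" unfolding p_def q_def by (rule noncol_S[OF assms(1) xy(1)])
  have pq: "p \<noteq> q"
  proof
    assume "p = q"
    hence "p $ (i1, s) = q $ (i1, s)" "p $ (i1, t) = q $ (i1, t)" by auto
    thus False using assms(1) xy(1) by (auto simp: p_def q_def minor_def)
  qed
  have c1: "pcollinear segre_pts p r1" "pcollinear segre_pts r1 q"
    "pcollinear segre_pts p r2" "pcollinear segre_pts r2 q"
    unfolding p_def q_def r1_def r2_def by (intro col_S_r col_S_l ax_nz x0 y0)+
  have X: "vec.span (convex_closure2 segre_pts p q) \<in> Xi segre_pts"
    using Xi_mem[OF _ _ nc c1(1,2)] St_in ax_nz x0 y0 unfolding p_def q_def by blast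
  have sub: "{p, q, r1, r2} \<subseteq> convex_closure2 segre_pts p q"
    using in_cc mid_in_cc[OF c1(1,2) pq nc] mid_in_cc[OF c1(3,4) pq nc] by auto
  have eq: "St (ax i1 :: 'a^'l) a + St (ax i2) b = c1 *s p + d1 *s r1 + c2 *s r2 + d2 *s q"
    unfolding xy p_def q_def r1_def r2_def by (auto simp: vec_eq_iff algebra_simps)
  have "c1 *s p + d1 *s r1 + c2 *s r2 + d2 *s q \<in> vec.span (convex_closure2 segre_pts p q)"
    using sub by (intro vec.span_add vec.span_scale vec.span_base; auto)
  thus ?thesis using X eq by auto
qed

lemma legal_zero_gen:
  assumes "\<And>w. w \<in> vec.span X \<Longrightarrow> \<exists>\<xi>1\<in>Xi X. \<exists>\<xi>2\<in>Xi X. \<exists>g1 g2. g1 \<in> \<xi>1 \<and> g2 \<in> \<xi>2 \<and> w = g1 + g2"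
  shows "legal X W \<longleftrightarrow> W = {0}"
proof
  assume L: "legal X W"
  have "W \<subseteq> {0}"
  proof
    fix w assume w: "w \<in> W"
    hence "w \<in> vec.span X" using L by (auto simp: legal_def)
    then obtain \<xi>1 \<xi>2 g1 g2 where x: "\<xi>1 \<in> Xi X" "\<xi>2 \<in> Xi X" "g1 \<in> \<xi>1" "g2 \<in> \<xi>2" "w = g1 + g2"
      using assms by blast
    have "w \<in> vec.span (\<xi>1 \<union> \<xi>2)" unfolding x(5) using x(3,4)
      by (intro vec.span_add vec.span_base) auto
    hence "w \<in> W \<inter> vec.span (\<xi>1 \<union> \<xi>2)" using w by auto
    thus "w \<in> {0}" using L x(1,2) unfolding legal_def by blast
  qed
  moreover have "0 \<in> W" using L by (auto simp: legal_def vec.subspace_0)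
  ultimately show "W = {0}" by auto
next
  assume "W = {0}"
  thus "legal X W" by (auto simp: legal_def vec.subspace_def vec.span_zero)
qed

lemma cover2:
  fixes C :: "'l set" and i j :: 'l
  assumes "finite C" "card C \<le> 2" "i \<noteq> j"
  shows "\<exists>i3 i4. i3 \<noteq> i4 \<and> C \<subseteq> {i3, i4}"
proof -
  consider "card C = 0" | "card C = 1" | "card C = 2" using assms(2) by linarith
  then show ?thesis
  proof cases
    case 1
    hence "C = {}" using assms(1) by simp
    thus ?thesis using assms(3) by (intro exI[of _ i] exI[of _ j]) simp
  next
    case 2
    then obtain x where x: "C = {x}" by (rule card_1_singletonE)
    show ?thesis
    proof (cases "x = i")
      case True thus ?thesis using x assms(3) by (intro exI[of _ i] exI[of _ j]) simp
    next
      case False thus ?thesis using x by (intro exI[of _ i] exI[of _ x]) simp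
    qed
  next
    case 3
    then obtain x y where "C = {x, y}" "x \<noteq> y" by (auto simp: card_2_iff)
    thus ?thesis by (intro exI[of _ x] exI[of _ y]) simp
  qed
qed

lemma segre_decomp:
  fixes w :: "'a::field^('l::finite \<times> 'k::finite)"
  assumes "2 \<le> CARD('l)" "CARD('l) \<le> 4" "2 \<le> CARD('k)"
  shows "\<exists>\<xi>1\<in>Xi (segre_pts :: ('a^('l \<times> 'k)) set). \<exists>\<xi>2\<in>Xi (segre_pts :: ('a^('l \<times> 'k)) set).
           \<exists>g1 g2. g1 \<in> \<xi>1 \<and> g2 \<in> \<xi>2 \<and> w = g1 + g2"
proof -
  obtain i1 i2 :: 'l where i12: "i1 \<noteq> i2" using two_elems[OF assms(1)] by blast
  have "card (UNIV - {i1, i2}) = CARD('l) - 2"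
    using i12 by (simp add: card_Diff_subset)
  hence c2: "card (UNIV - {i1, i2}) \<le> 2" using assms(2) by linarith
  have fin: "finite (UNIV - {i1, i2} :: 'l set)" by simp
  obtain i3 i4 where i34: "i3 \<noteq> i4" "UNIV - {i1, i2} \<subseteq> {i3, i4}"
    using cover2[OF fin c2 i12] by blast
  define r where "r = (\<lambda>i. \<chi> j. w $ (i, j))"
  define a where "a = (if i3 \<in> {i1, i2} then 0 else r i3)"
  define b where "b = (if i4 \<in> {i1, i2} then 0 else r i4)"
  obtain \<xi>1 where x1: "\<xi>1 \<in> Xi segre_pts" "St (ax i1 :: 'a^'l) (r i1) + St (ax i2) (r i2) \<in> \<xi>1"
    using seg_grid[OF i12 assms(3)] by blast
  obtain \<xi>2 where x2: "\<xi>2 \<in> Xi segre_pts" "St (ax i3 :: 'a^'l) a + St (ax i4) b \<in> \<xi>2"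
    using seg_grid[OF i34(1) assms(3)] by blast
  have e: "w = (St (ax i1 :: 'a^'l) (r i1) + St (ax i2) (r i2)) + (St (ax i3 :: 'a^'l) a + St (ax i4) b)"
  proof (subst vec_eq_iff, intro allI)
    fix ij :: "'l \<times> 'k"
    obtain i j where ij: "ij = (i, j)" by (cases ij)
    have comp: "((St (ax i1 :: 'a^'l) (r i1) + St (ax i2) (r i2)) + (St (ax i3 :: 'a^'l) a + St (ax i4) b)) $ (i, j)
      = (if i = i1 then w$(i1,j) else 0) + (if i = i2 then w$(i2,j) else 0)
        + ((if i = i3 \<and> i3 \<notin> {i1, i2} then w$(i3,j) else 0) + (if i = i4 \<and> i4 \<notin> {i1, i2} then w$(i4,j) else 0))"
      by (simp add: r_def a_def b_def)
    have "i \<in> {i1, i2, i3, i4}" using i34 by auto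
    hence "w $ (i, j) = (if i = i1 then w$(i1,j) else 0) + (if i = i2 then w$(i2,j) else 0)
        + ((if i = i3 \<and> i3 \<notin> {i1, i2} then w$(i3,j) else 0) + (if i = i4 \<and> i4 \<notin> {i1, i2} then w$(i4,j) else 0))"
      using i12 i34(1) by (elim insertE emptyE; auto)
    thus "w $ ij = ((St (ax i1 :: 'a^'l) (r i1) + St (ax i2) (r i2)) + (St (ax i3 :: 'a^'l) a + St (ax i4) b)) $ ij"
      unfolding ij comp .
  qed
  show ?thesis
    by (rule bexI[OF _ x1(1)], rule bexI[OF _ x2(1)], intro exI conjI, rule x1(2), rule x2(2), rule e)
qed

lemma segre_part:
  assumes "2 \<le> CARD('l::finite)" "CARD('l) \<le> 4" "2 \<le> CARD('k::finite)"
  shows "\<forall>W. legal (segre_pts :: ('a::field^('l \<times> 'k)) set) W \<longleftrightarrow> W = {0}"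
  by (intro allI legal_zero_gen, rule segre_decomp[OF assms])

definition Mw :: "'a::field^'n \<Rightarrow> 'a^'n \<Rightarrow> 'a^('n \<times> 'n)" where
  "Mw u v = (\<chi> ij. u$fst ij * v$snd ij - u$snd ij * v$fst ij)"

lemma Mw_nth[simp]: "Mw u v $ (i, j) = u$i * v$j - u$j * v$i" by (simp add: Mw_def)

lemma Mw_in:
  assumes "Mw u v \<noteq> 0" shows "Mw u v \<in> grass_pts"
proof -
  have uv: "u \<noteq> v"
  proof assume "u = v" hence "Mw u v = 0" by (auto simp: vec_eq_iff mult.commute) thus False using assms by simp qed
  have v0: "v \<noteq> 0"
  proof assume "v = 0" hence "Mw u v = 0" by (auto simp: vec_eq_iff) thus False using assms by simp qed
  have "u \<notin> vec.span {v}"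
  proof
    assume "u \<in> vec.span {v}"
    then obtain k where "u = k *s v" by (auto simp: vec.span_singleton)
    hence "Mw u v = 0" by (auto simp: vec_eq_iff)
    thus False using assms by simp
  qed
  hence "vec.independent {u, v}" using v0 by (intro vec.independent_insertI) (auto simp: vec.span_empty vec.independent_empty)
  thus ?thesis unfolding grass_pts_def Mw_def using uv by blast
qed

lemma Mw_lin_r: "a *s Mw u v1 + b *s Mw u v2 = Mw u (a *s v1 + b *s v2)"
  by (auto simp: vec_eq_iff algebra_simps)

lemma col_G0:
  assumes "Mw u v \<noteq> 0" "Mw u v' \<noteq> 0"
  shows "pcollinear grass_pts (Mw u v) (Mw u v')"
  unfolding pcollinear_def
proof (intro conjI assms subsetI)
  fix x assume x: "x \<in> vec.span {Mw u v, Mw u v'} - {0}"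
  then obtain a b where "x = a *s Mw u v + b *s Mw u v'" using span2 by blast
  hence "x = Mw u (a *s v + b *s v')" by (simp add: Mw_lin_r)
  thus "x \<in> grass_pts" using Mw_in x by auto
qed

lemma col_G:
  assumes "Mw u v = P" "Mw u v' = Q" "P \<noteq> 0" "Q \<noteq> 0"
  shows "pcollinear grass_pts P Q"
  using col_G0[of u v v'] assms by simp

lemma pluecker:
  assumes "z \<in> grass_pts"
  shows "z$(a,b) * z$(s,t) - z$(a,s) * z$(b,t) + z$(a,t) * z$(b,s) = 0"
  using assms unfolding grass_pts_def by (auto simp: algebra_simps)

lemma Mw_ax_nz:
  assumes "x$a = 0" "x \<noteq> 0" shows "Mw (ax a) x \<noteq> 0"
proof -
  obtain m where "x$m \<noteq> 0" using assms(2) by (metis vec_eq_iff zero_index)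
  hence "Mw (ax a) x $ (a, m) \<noteq> 0" using assms(1) by auto
  thus ?thesis by (metis zero_index)
qed

lemma KQ:
  fixes x y :: "'a::field^'n"
  assumes ab: "a \<noteq> b" and xa: "x$a = 0" "x$b = 0" "y$a = 0" "y$b = 0" and mn: "minor x y s t \<noteq> 0"
  shows "\<exists>\<xi>\<in>Xi (grass_pts :: ('a^('n \<times> 'n)) set).
     c *s Mw (ax a) (ax b) + Mw (ax a) (c1 *s x + d1 *s y) + Mw (ax b) (c2 *s x + d2 *s y) + d *s Mw x y \<in> \<xi>"
proof -
  have x0: "x \<noteq> 0" and y0: "y \<noteq> 0" using minor_nz[OF mn] by auto
  define p where "p = Mw (ax a :: 'a^'n) (ax b)"
  define q where "q = Mw x y"
  define r1 where "r1 = Mw (ax a :: 'a^'n) x"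
  define r2 where "r2 = Mw (ax a :: 'a^'n) y"
  define r3 where "r3 = Mw (ax b :: 'a^'n) x"
  define r4 where "r4 = Mw (ax b :: 'a^'n) y"
  have p0: "p \<noteq> 0"
  proof - have "p $ (a,b) \<noteq> 0" using ab by (simp add: p_def) thus ?thesis by (metis zero_index) qed
  have q0: "q \<noteq> 0"
  proof - have "q $ (s,t) \<noteq> 0" using mn by (simp add: q_def minor_def) thus ?thesis by (metis zero_index) qed
  have r0: "r1 \<noteq> 0" "r2 \<noteq> 0" "r3 \<noteq> 0" "r4 \<noteq> 0"
    unfolding r1_def r2_def r3_def r4_def using Mw_ax_nz xa x0 y0 by auto
  have pq: "p \<noteq> q"
  proof assume "p = q" hence "p $ (a,b) = q $ (a,b)" by simp thus False using ab xa by (simp add: p_def q_def) qed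
  have nc: "\<not> pcollinear grass_pts p q"
  proof
    assume c: "pcollinear grass_pts p q"
    have st: "s \<noteq> a" "s \<noteq> b" "t \<noteq> a" "t \<noteq> b" "s \<noteq> t" using mn xa by (auto simp: minor_def)
    define z where "z = p + q"
    have "z \<in> vec.span {p, q}" unfolding z_def by (intro vec.span_add vec.span_base) auto
    moreover have zv: "z$(a,b) * z$(s,t) - z$(a,s) * z$(b,t) + z$(a,t) * z$(b,s) = minor x y s t"
      using ab st xa by (simp add: z_def p_def q_def minor_def)
    moreover have "z \<noteq> 0" using zv mn by auto
    ultimately have "z \<in> grass_pts" using c unfolding pcollinear_def by blast
    from pluecker[OF this, of a b s t] zv mn show False by simp
  qed
  have e1: "Mw (ax b) (- ax a) = p" "Mw x (- ax a) = r1" "Mw y (- ax a) = r2" "Mw x (- ax b) = r3"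
    "Mw y (- ax b) = r4" "Mw y (- x) = q"
    unfolding p_def q_def r1_def r2_def r3_def r4_def by (auto simp: vec_eq_iff algebra_simps)
  have c1: "pcollinear grass_pts p r1" "pcollinear grass_pts r1 q"
    using col_G[OF p_def[symmetric] r1_def[symmetric]] col_G[OF e1(2) q_def[symmetric]] p0 q0 r0
    by auto
  have c2: "pcollinear grass_pts p r2" "pcollinear grass_pts r2 q"
    using col_G[OF p_def[symmetric] r2_def[symmetric]] col_G[OF e1(3) e1(6)] p0 q0 r0
    by auto
  have c3: "pcollinear grass_pts p r3" "pcollinear grass_pts r3 q"
    using col_G[OF e1(1) r3_def[symmetric]] col_G[OF e1(4) q_def[symmetric]] p0 q0 r0
    by auto
  have c4: "pcollinear grass_pts p r4" "pcollinear grass_pts r4 q"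
    using col_G[OF e1(1) r4_def[symmetric]] col_G[OF e1(5) e1(6)] p0 q0 r0
    by auto
  have X: "vec.span (convex_closure2 grass_pts p q) \<in> Xi grass_pts"
  proof -
    have pX: "p \<in> grass_pts" using Mw_in p0 unfolding p_def by blast
    have qX: "q \<in> grass_pts" using Mw_in q0 unfolding q_def by blast
    show ?thesis by (rule Xi_mem[OF pX qX nc c1])
  qed
  have sub: "{p, q, r1, r2, r3, r4} \<subseteq> convex_closure2 grass_pts p q"
    using in_cc mid_in_cc[OF c1 pq nc] mid_in_cc[OF c2 pq nc] mid_in_cc[OF c3 pq nc]
      mid_in_cc[OF c4 pq nc] by auto
  have eq: "c *s Mw (ax a) (ax b) + Mw (ax a) (c1 *s x + d1 *s y) + Mw (ax b) (c2 *s x + d2 *s y) + d *s Mw x y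
      = c *s p + c1 *s r1 + d1 *s r2 + c2 *s r3 + d2 *s r4 + d *s q"
    unfolding p_def q_def r1_def r2_def r3_def r4_def by (auto simp: vec_eq_iff algebra_simps)
  have "c *s p + c1 *s r1 + d1 *s r2 + c2 *s r3 + d2 *s r4 + d *s q \<in> vec.span (convex_closure2 grass_pts p q)"
    using sub by (intro vec.span_add vec.span_scale vec.span_base; auto)
  thus ?thesis using X eq by auto
qed

definition alt :: "'a::field^('n::finite \<times> 'n) \<Rightarrow> bool" where
  "alt w \<longleftrightarrow> (\<forall>i. w$(i,i) = 0) \<and> (\<forall>i j. w$(j,i) = - w$(i,j))"

lemma span_alt:
  assumes "w \<in> vec.span (grass_pts :: ('a::field^('n::finite \<times> 'n)) set)" shows "alt w"
proof -
  have "vec.span (grass_pts :: ('a::field^('n \<times> 'n)) set) \<subseteq> {w. alt w}"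
  proof (rule vec.span_minimal)
    show "grass_pts \<subseteq> {w :: 'a^('n \<times> 'n). alt w}"
    proof
      fix z :: "'a^('n \<times> 'n)" assume "z \<in> grass_pts"
      then obtain u v :: "'a^'n" where "z = Mw u v" unfolding grass_pts_def Mw_def by blast
      thus "z \<in> {w. alt w}" unfolding alt_def by simp
    qed
    show "vec.subspace {w :: 'a^('n \<times> 'n). alt w}"
    proof (rule vec.subspaceI)
      show "0 \<in> {w :: 'a^('n \<times> 'n). alt w}" by (simp add: alt_def)
    next
      fix x y :: "'a^('n \<times> 'n)" assume hx: "x \<in> {w. alt w}" and hy: "y \<in> {w. alt w}"
      have "(x+y)$(i,i) = 0" for i using hx hy unfolding alt_def mem_Collect_eq by simp
      moreover have "(x+y)$(j,i) = -(x+y)$(i,j)" for i j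
      proof -
        have "x$(j,i) = -x$(i,j)" "y$(j,i) = -y$(i,j)" using hx hy unfolding alt_def mem_Collect_eq by blast+
        thus ?thesis by simp
      qed
      ultimately show "x + y \<in> {w. alt w}" unfolding alt_def mem_Collect_eq by blast
    next
      fix c and x :: "'a^('n \<times> 'n)" assume hx: "x \<in> {w. alt w}"
      have "(c *s x)$(i,i) = 0" for i using hx unfolding alt_def mem_Collect_eq by simp
      moreover have "(c *s x)$(j,i) = -(c *s x)$(i,j)" for i j
      proof -
        have "x$(j,i) = -x$(i,j)" using hx unfolding alt_def mem_Collect_eq by blast
        thus ?thesis by simp
      qed
      ultimately show "c *s x \<in> {w. alt w}" unfolding alt_def mem_Collect_eq by blast
    qed
  qed
  thus ?thesis using assms by auto
qed

lemma decomp1: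
  fixes w :: "'a::field^('n::finite \<times> 'n)"
  assumes al: "alt w" and ab: "a \<noteq> b"
  shows "w = (w$(a,b) *s Mw (ax a) (ax b) + Mw (ax a) (\<chi> j. if j = a \<or> j = b then 0 else w$(a,j))
      + Mw (ax b) (\<chi> j. if j = a \<or> j = b then 0 else w$(b,j)))
      + (\<chi> ij. if fst ij = a \<or> fst ij = b \<or> snd ij = a \<or> snd ij = b then 0 else w$ij)"
proof (subst vec_eq_iff, intro allI)
  fix ij :: "'n \<times> 'n"
  obtain i j where ij: "ij = (i, j)" by (cases ij)
  have d: "w$(a,a) = 0" "w$(b,b) = 0" and s1: "w$(b,a) = - w$(a,b)" using al unfolding alt_def by blast+
  have s2: "\<And>k. k \<noteq> a \<Longrightarrow> k \<noteq> b \<Longrightarrow> w$(k,a) = - w$(a,k)"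
    and s3: "\<And>k. k \<noteq> a \<Longrightarrow> k \<noteq> b \<Longrightarrow> w$(k,b) = - w$(b,k)" using al unfolding alt_def by blast+
  have "(i = a \<or> i = b \<or> (i \<noteq> a \<and> i \<noteq> b)) \<and> (j = a \<or> j = b \<or> (j \<noteq> a \<and> j \<noteq> b))" by blast
  thus "w $ ij = ((w$(a,b) *s Mw (ax a) (ax b) + Mw (ax a) (\<chi> j. if j = a \<or> j = b then 0 else w$(a,j))
      + Mw (ax b) (\<chi> j. if j = a \<or> j = b then 0 else w$(b,j)))
      + (\<chi> ij. if fst ij = a \<or> fst ij = b \<or> snd ij = a \<or> snd ij = b then 0 else w$ij)) $ ij"
    unfolding ij using ab by (elim conjE disjE; simp add: d s1 s2 s3)
qed

lemma decomp2:
  fixes w :: "'a::field^('n::finite \<times> 'n)"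
  assumes al: "alt w" and dist: "a \<noteq> b" "a \<noteq> c" "a \<noteq> d" "b \<noteq> c" "b \<noteq> d" "c \<noteq> d"
    and sup: "\<And>i j. i \<notin> {a,b,c,d} \<or> j \<notin> {a,b,c,d} \<Longrightarrow> w$(i,j) = 0"
  shows "w = w$(a,b) *s Mw (ax a) (ax b) + Mw (ax a) (w$(a,c) *s ax c + w$(a,d) *s ax d)
     + Mw (ax b) (w$(b,c) *s ax c + w$(b,d) *s ax d) + w$(c,d) *s Mw (ax c) (ax d)"
proof (subst vec_eq_iff, intro allI)
  fix ij :: "'n \<times> 'n"
  obtain i j where ij: "ij = (i, j)" by (cases ij)
  have d: "w$(a,a) = 0" "w$(b,b) = 0" "w$(c,c) = 0" "w$(d,d) = 0"
    and s: "w$(b,a) = - w$(a,b)" "w$(c,a) = - w$(a,c)" "w$(d,a) = - w$(a,d)"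
      "w$(c,b) = - w$(b,c)" "w$(d,b) = - w$(b,d)" "w$(d,c) = - w$(c,d)"
    using al unfolding alt_def by blast+
  have z1: "\<And>i j. i \<notin> {a,b,c,d} \<Longrightarrow> w$(i,j) = 0" and z2: "\<And>i j. j \<notin> {a,b,c,d} \<Longrightarrow> w$(i,j) = 0"
    using sup by auto
  have "(i = a \<or> i = b \<or> i = c \<or> i = d \<or> i \<notin> {a,b,c,d}) \<and> (j = a \<or> j = b \<or> j = c \<or> j = d \<or> j \<notin> {a,b,c,d})"
    by blast
  thus "w $ ij = (w$(a,b) *s Mw (ax a) (ax b) + Mw (ax a) (w$(a,c) *s ax c + w$(a,d) *s ax d)
     + Mw (ax b) (w$(b,c) *s ax c + w$(b,d) *s ax d) + w$(c,d) *s Mw (ax c) (ax d)) $ ij"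
    unfolding ij using dist by (elim conjE disjE; simp add: d s z1 z2)
qed

lemma cover2':
  fixes C :: "'l set" and i j :: 'l
  assumes "finite C" "card C \<le> 2" "i \<noteq> j"
  shows "\<exists>i3 i4. i3 \<noteq> i4 \<and> C \<subseteq> {i3, i4} \<and> {i3, i4} \<subseteq> C \<union> {i, j}"
proof -
  consider "card C = 0" | "card C = 1" | "card C = 2" using assms(2) by linarith
  then show ?thesis
  proof cases
    case 1
    hence "C = {}" using assms(1) by simp
    thus ?thesis using assms(3) by (intro exI[of _ i] exI[of _ j]) simp
  next
    case 2
    then obtain x where x: "C = {x}" by (rule card_1_singletonE)
    show ?thesis
    proof (cases "x = i")
      case True thus ?thesis using x assms(3) by (intro exI[of _ i] exI[of _ j]) simp
    next
      case False show ?thesis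
        apply (rule exI[of _ i], rule exI[of _ x]) using x False by auto
    qed
  next
    case 3
    then obtain x y where "C = {x, y}" "x \<noteq> y" by (auto simp: card_2_iff)
    thus ?thesis by (intro exI[of _ x] exI[of _ y]) simp
  qed
qed

lemma two_in:
  assumes "finite R" "2 \<le> card R" shows "\<exists>x y. x \<in> R \<and> y \<in> R \<and> x \<noteq> y"
proof -
  have "R \<noteq> {}" using assms(2) by auto
  then obtain x where x: "x \<in> R" by blast
  have "card (R - {x}) \<ge> 1" using assms x by simp
  hence "R - {x} \<noteq> {}" by (metis card.empty not_one_le_zero)
  then obtain y where "y \<in> R - {x}" by blast
  thus ?thesis using x by blast
qed

lemma grass_decomp:
  fixes w :: "'a::field^('n::finite \<times> 'n)"
  assumes card: "CARD('n) \<in> {5, 6}" and ws: "w \<in> vec.span grass_pts"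
  shows "\<exists>\<xi>1\<in>Xi (grass_pts :: ('a^('n \<times> 'n)) set). \<exists>\<xi>2\<in>Xi (grass_pts :: ('a^('n \<times> 'n)) set).
           \<exists>g1 g2. g1 \<in> \<xi>1 \<and> g2 \<in> \<xi>2 \<and> w = g1 + g2"
proof -
  have al: "alt w" by (rule span_alt[OF ws])
  have c5: "5 \<le> CARD('n)" "CARD('n) \<le> 6" using card by auto
  have "2 \<le> CARD('n)" using c5 by linarith
  then obtain a b :: 'n where ab: "a \<noteq> b" using two_elems by blast
  define R where "R = UNIV - {a, b}"
  have cR: "card R = CARD('n) - 2" unfolding R_def using ab by (simp add: card_Diff_subset)
  have finR: "finite R" by simp
  obtain a' b' where ab': "a' \<in> R" "b' \<in> R" "a' \<noteq> b'" using two_in[OF finR] cR c5 by fastforce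
  have cR': "card (R - {a', b'}) \<le> 2" using cR c5 ab' by (simp add: card_Diff_subset)
  obtain c' d' where cd: "c' \<noteq> d'" "R - {a', b'} \<subseteq> {c', d'}" "{c', d'} \<subseteq> (R - {a', b'}) \<union> {a, b}"
    using cover2'[OF _ cR' ab] finR by blast
  have aR: "a \<notin> R" "b \<notin> R" unfolding R_def by auto
  have dist2: "a' \<noteq> c'" "a' \<noteq> d'" "b' \<noteq> c'" "b' \<noteq> d'" using cd ab' aR by auto
  define al1 where "al1 = (\<chi> j. if j = a \<or> j = b then 0 else w$(a,j))"
  define be1 where "be1 = (\<chi> j. if j = a \<or> j = b then 0 else w$(b,j))"
  define w2 where "w2 = (\<chi> ij. if fst ij = a \<or> fst ij = b \<or> snd ij = a \<or> snd ij = b then 0 else w$ij)"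
  define g1 where "g1 = w$(a,b) *s Mw (ax a) (ax b) + Mw (ax a) al1 + Mw (ax b) be1"
  have e1: "w = g1 + w2" unfolding g1_def al1_def be1_def w2_def by (rule decomp1[OF al ab])
  have sa: "\<forall>m. m \<notin> R \<longrightarrow> al1$m = 0" "\<forall>m. m \<notin> R \<longrightarrow> be1$m = 0"
    unfolding al1_def be1_def R_def by auto
  obtain x y s t c1 d1 c2 d2 where xy: "\<forall>m. m \<notin> R \<longrightarrow> x$m = 0" "\<forall>m. m \<notin> R \<longrightarrow> y$m = 0"
    "minor x y s t \<noteq> 0" "al1 = c1 *s x + d1 *s y" "be1 = c2 *s x + d2 *s y"
    using pair_ext[OF ab' sa] by blast
  obtain \<xi>1 where x1: "\<xi>1 \<in> Xi grass_pts"
    "w$(a,b) *s Mw (ax a) (ax b) + Mw (ax a) (c1 *s x + d1 *s y) + Mw (ax b) (c2 *s x + d2 *s y) + 0 *s Mw x y \<in> \<xi>1"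
  proof -
    have xa: "x$a = 0" "x$b = 0" "y$a = 0" "y$b = 0" using xy(1,2) aR by auto
    show ?thesis using KQ[OF ab xa xy(3), where ?c="w$(a,b)" and ?c1.0=c1 and ?d1.0=d1 and ?c2.0=c2 and ?d2.0=d2 and ?d=0]
      that by blast
  qed
  have g1x: "g1 \<in> \<xi>1" using x1(2) unfolding g1_def xy(4,5) by simp
  have al2: "alt w2"
  proof -
    have "w2$(i,i) = 0" for i
    proof -
      have "w$(i,i) = 0" using al unfolding alt_def by blast
      thus ?thesis unfolding w2_def by simp
    qed
    moreover have "w2$(j,i) = - w2$(i,j)" for i j
    proof -
      have "w$(j,i) = - w$(i,j)" using al unfolding alt_def by blast
      thus ?thesis unfolding w2_def by auto
    qed
    ultimately show ?thesis unfolding alt_def by blast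
  qed
  have sup: "w2$(i,j) = 0" if "i \<notin> {a',b',c',d'} \<or> j \<notin> {a',b',c',d'}" for i j
  proof -
    have "i \<in> {a, b} \<or> j \<in> {a, b}" using that cd(2) unfolding R_def by blast
    thus ?thesis unfolding w2_def by auto
  qed
  have e2: "w2 = w2$(a',b') *s Mw (ax a') (ax b') + Mw (ax a') (w2$(a',c') *s ax c' + w2$(a',d') *s ax d')
     + Mw (ax b') (w2$(b',c') *s ax c' + w2$(b',d') *s ax d') + w2$(c',d') *s Mw (ax c') (ax d')"
    by (rule decomp2[OF al2 ab'(3) dist2 cd(1) sup])
  have mn: "minor (ax c' :: 'a^'n) (ax d') c' d' \<noteq> 0" using cd(1) by (simp add: minor_def)
  obtain \<xi>2 where x2: "\<xi>2 \<in> Xi grass_pts"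
    "w2$(a',b') *s Mw (ax a') (ax b') + Mw (ax a') (w2$(a',c') *s ax c' + w2$(a',d') *s ax d')
     + Mw (ax b') (w2$(b',c') *s ax c' + w2$(b',d') *s ax d') + w2$(c',d') *s Mw (ax c') (ax d') \<in> \<xi>2"
  proof -
    have xa: "(ax c' :: 'a^'n)$a' = 0" "(ax c' :: 'a^'n)$b' = 0" "(ax d' :: 'a^'n)$a' = 0" "(ax d' :: 'a^'n)$b' = 0"
      using dist2 by auto
    show ?thesis using KQ[OF ab'(3) xa mn, where ?c="w2$(a',b')" and ?c1.0="w2$(a',c')" and ?d1.0="w2$(a',d')"
      and ?c2.0="w2$(b',c')" and ?d2.0="w2$(b',d')" and ?d="w2$(c',d')"] that by blast
  qed
  have g2x: "w2 \<in> \<xi>2" by (subst e2) (rule x2(2))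
  show ?thesis
    by (rule bexI[OF _ x1(1)], rule bexI[OF _ x2(1)], intro exI conjI, rule g1x, rule g2x, rule e1)
qed

lemma grass_part:
  assumes "CARD('n::finite) \<in> {5, 6}"
  shows "\<forall>W. legal (grass_pts :: ('a::field^('n \<times> 'n)) set) W \<longleftrightarrow> W = {0}"
  by (intro allI legal_zero_gen, rule grass_decomp[OF assms])

theorem proposition3p8:
  shows "(2 \<le> CARD('l::finite) \<and> CARD('l) \<le> 4 \<and> 2 \<le> CARD('k::finite) \<longrightarrow>
            (\<forall>W. legal (segre_pts :: ('a::field^('l \<times> 'k)) set) W \<longleftrightarrow> W = {0}))
       \<and> (CARD('n::finite) \<in> {5, 6} \<longrightarrow>
            (\<forall>W. legal (grass_pts :: ('a^('n \<times> 'n)) set) W \<longleftrightarrow> W = {0}))"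
proof (intro conjI impI)
  assume h: "2 \<le> CARD('l) \<and> CARD('l) \<le> 4 \<and> 2 \<le> CARD('k)"
  show "\<forall>W. legal (segre_pts :: ('a::field^('l \<times> 'k)) set) W \<longleftrightarrow> W = {0}"
    using h by (elim conjE) (rule segre_part)
next
  assume h: "CARD('n) \<in> {5, 6}"
  show "\<forall>W. legal (grass_pts :: ('a^('n \<times> 'n)) set) W \<longleftrightarrow> W = {0}"
    using h by (rule grass_part)
qed

end
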